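(* Let $X$ be a real Banach space with $\dim X\ge 2$ and let $\alpha,\beta>0$. Then $$\min\{\alpha,\beta\}\,\mu(X)\le DW_B(X,\alpha,\beta)\le 2\max\{\alpha,\beta\}\,\mu(X).$$
   Context: For $x,y\in X$, $x\perp_B y$ (Birkhoff orthogonality) means $\|x+\lambda y\|\ge\|x\|$ for all $\lambda\in\mathbb R$. For $\alpha,\beta>0$, $$DW_B(X,\alpha,\beta)=\sup\left\{\frac{\alpha\|x\|+\beta\|y\|}{\|x-y\|}\left\|\frac{x}{\|x\|}-\frac{y}{\|y\|}\right\|: x,y\in X\setminus\{0\},\ x\perp_B y\right\}.$$ The rectangular constant is $\mu(X)=\sup\left\{\frac{\|x\|+\|y\|}{\|x+y\|}: x,y\in X\setminus\{0\},\ x\perp_B y\right\}$. *)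

theory Defs
  imports "HOL-Analysis.Analysis"
begin

definition birkhoff_orth :: "'a::real_normed_vector \<Rightarrow> 'a \<Rightarrow> bool" where
  "birkhoff_orth x y \<longleftrightarrow> (\<forall>t::real. norm (x + t *\<^sub>R y) \<ge> norm x)"

definition DW_B :: "'a::real_normed_vector itself \<Rightarrow> real \<Rightarrow> real \<Rightarrow> real" where
  "DW_B X \<alpha> \<beta> = Sup {(\<alpha> * norm x + \<beta> * norm y) / norm (x - y)
        * norm (x /\<^sub>R norm x - y /\<^sub>R norm y) | x y :: 'a.
        x \<noteq> 0 \<and> y \<noteq> 0 \<and> birkhoff_orth x y}"

definition rect_const :: "'a::real_normed_vector itself \<Rightarrow> real" where
  "rect_const X = Sup {(norm x + norm y) / norm (x + y) | x y :: 'a.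
        x \<noteq> 0 \<and> y \<noteq> 0 \<and> birkhoff_orth x y}"

end

theory Submission
  imports Defs
begin

lemma orth_neg: "birkhoff_orth x y \<Longrightarrow> birkhoff_orth x (-y)"
  unfolding birkhoff_orth_def
  by (metis scaleR_minus_left scaleR_minus_right)

lemma orth_plus: "birkhoff_orth x y \<Longrightarrow> norm (x + y) \<ge> norm x"
  unfolding birkhoff_orth_def by (metis scaleR_one)

lemma orth_minus: "birkhoff_orth x y \<Longrightarrow> norm (x - y) \<ge> norm x"
  unfolding birkhoff_orth_def by (metis scaleR_minus1_left diff_conv_add_uminus)

lemma mu_bound:
  assumes "birkhoff_orth x y" "x \<noteq> 0"
  shows "(norm x + norm y) / norm (x + y) \<le> 3"
proof -
  have a: "norm (x + y) \<ge> norm x" using orth_plus[OF assms(1)] .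
  have p: "norm x > 0" using assms(2) by simp
  have "norm y \<le> norm (x + y) + norm x"
    by (metis add_diff_cancel_left' norm_triangle_ineq4 add.commute)
  hence "norm x + norm y \<le> 3 * norm (x + y)" using a by linarith
  thus ?thesis using a p by (simp add: divide_le_eq)
qed

lemma unit_sum:
  assumes "birkhoff_orth x y" "x \<noteq> 0" "y \<noteq> 0"
  shows "norm (x /\<^sub>R norm x + y /\<^sub>R norm y) \<ge> 1"
proof -
  have e: "x /\<^sub>R norm x + y /\<^sub>R norm y = (1 / norm x) *\<^sub>R (x + (norm x / norm y) *\<^sub>R y)"
    using assms by (simp add: scaleR_add_right divide_inverse_commute)
  have "norm (x + (norm x / norm y) *\<^sub>R y) \<ge> norm x"
    using assms(1) unfolding birkhoff_orth_def by blast
  hence "(1 / norm x) * norm (x + (norm x / norm y) *\<^sub>R y) \<ge> 1"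
    using assms(2) by (simp add: le_divide_eq)
  thus ?thesis unfolding e by simp
qed

lemma exists_orth:
  assumes "\<exists>u v :: 'a::banach. u \<noteq> v \<and> independent {u, v}"
  shows "\<exists>x y :: 'a. x \<noteq> 0 \<and> y \<noteq> 0 \<and> birkhoff_orth x y"
proof -
  obtain y x :: 'a where uv: "y \<noteq> x" "independent {y, x}" using assms by blast
  have ind: "y \<notin> span {x}" "independent {x}"
    using uv by (auto simp: independent_insert)
  have x0: "x \<noteq> 0" using ind(2) by (auto simp: independent_insert)
  define f where "f = (\<lambda>t::real. norm (y + t *\<^sub>R x))"
  define R where "R = 2 * norm y / norm x"
  have cont: "continuous_on {-R..R} f" unfolding f_def by (intro continuous_intros)
  have R0: "R \<ge> 0" unfolding R_def by simp
  obtain t0 where t0: "t0 \<in> {-R..R}" "\<And>t. t \<in> {-R..R} \<Longrightarrow> f t0 \<le> f t"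
    using continuous_attains_inf[OF compact_Icc _ cont] R0 by fastforce
  have f0: "f t0 \<le> f 0" using t0 R0 by auto
  have all: "f t0 \<le> f t" for t
  proof (cases "t \<in> {-R..R}")
    case True thus ?thesis using t0 by blast
  next
    case False
    hence "\<bar>t\<bar> > R" by auto
    hence "\<bar>t\<bar> * norm x > 2 * norm y" unfolding R_def using x0
      by (simp add: divide_less_eq)
    moreover have "f t \<ge> \<bar>t\<bar> * norm x - norm y" unfolding f_def
      by (metis norm_diff_ineq norm_scaleR real_norm_def add.commute)
    ultimately have "f t > f 0" unfolding f_def by simp
    thus ?thesis using f0 by linarith
  qed
  define y' where "y' = y + t0 *\<^sub>R x"
  have "y' \<noteq> 0"
  proof
    assume "y' = 0"
    hence "y = (- t0) *\<^sub>R x" unfolding y'_def by (simp add: eq_neg_iff_add_eq_0 add.commute)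
    hence "y \<in> span {x}" by (metis span_base span_scale insertI1)
    thus False using ind(1) by blast
  qed
  moreover have "birkhoff_orth y' x" unfolding birkhoff_orth_def
  proof
    fix s :: real
    have "norm (y' + s *\<^sub>R x) = f (t0 + s)" unfolding f_def y'_def
      by (simp add: scaleR_add_left algebra_simps)
    thus "norm y' \<le> norm (y' + s *\<^sub>R x)" using all[of "t0 + s"] unfolding f_def y'_def by simp
  qed
  ultimately show ?thesis using x0 by blast
qed

theorem theorem5:
  fixes \<alpha> \<beta> :: real
  assumes dim2: "\<exists>u v :: 'a::banach. u \<noteq> v \<and> independent {u, v}"
    and "\<alpha> > 0" and "\<beta> > 0"
  shows "min \<alpha> \<beta> * rect_const TYPE('a) \<le> DW_B TYPE('a) \<alpha> \<beta>
     \<and> DW_B TYPE('a) \<alpha> \<beta> \<le> 2 * max \<alpha> \<beta> * rect_const TYPE('a)"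
proof -
  define S where "S = {(norm x + norm y) / norm (x + y) | x y :: 'a.
        x \<noteq> 0 \<and> y \<noteq> 0 \<and> birkhoff_orth x y}"
  define T where "T = {(\<alpha> * norm x + \<beta> * norm y) / norm (x - y)
        * norm (x /\<^sub>R norm x - y /\<^sub>R norm y) | x y :: 'a.
        x \<noteq> 0 \<and> y \<noteq> 0 \<and> birkhoff_orth x y}"
  have rc: "rect_const TYPE('a) = Sup S" unfolding rect_const_def S_def by simp
  have dw: "DW_B TYPE('a) \<alpha> \<beta> = Sup T" unfolding DW_B_def T_def by simp
  obtain x0 y0 :: 'a where p0: "x0 \<noteq> 0" "y0 \<noteq> 0" "birkhoff_orth x0 y0"
    using exists_orth[OF dim2] by blast
  have Sne: "S \<noteq> {}" unfolding S_def using p0 by blast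
  have Tne: "T \<noteq> {}" unfolding T_def using p0 by blast
  have Sbdd: "bdd_above S" unfolding S_def bdd_above_def using mu_bound by blast
  let ?M = "max \<alpha> \<beta>"
  let ?m = "min \<alpha> \<beta>"
  have Mpos: "?M > 0" using assms by simp
  have mpos: "?m > 0" using assms by simp
  have Tle: "t \<le> 2 * ?M * Sup S" if "t \<in> T" for t
  proof -
    obtain x y :: 'a where xy: "x \<noteq> 0" "y \<noteq> 0" "birkhoff_orth x y"
      and t: "t = (\<alpha> * norm x + \<beta> * norm y) / norm (x - y)
        * norm (x /\<^sub>R norm x - y /\<^sub>R norm y)"
      using \<open>t \<in> T\<close> unfolding T_def by blast
    have d: "norm (x - y) > 0" using orth_minus[OF xy(3)] xy(1) by (metis zero_less_norm_iff order.strict_trans2)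
    have N: "norm (x /\<^sub>R norm x - y /\<^sub>R norm y) \<le> 2"
    proof -
      have "norm (x /\<^sub>R norm x - y /\<^sub>R norm y) \<le> norm (x /\<^sub>R norm x) + norm (y /\<^sub>R norm y)"
        by (rule norm_triangle_ineq4)
      also have "\<dots> = 2" using xy by simp
      finally show ?thesis .
    qed
    have num: "\<alpha> * norm x + \<beta> * norm y \<le> ?M * (norm x + norm y)"
    proof -
      have "\<alpha> * norm x \<le> ?M * norm x" by (intro mult_right_mono) auto
      moreover have "\<beta> * norm y \<le> ?M * norm y" by (intro mult_right_mono) auto
      ultimately show ?thesis by (simp add: distrib_left)
    qed
    have q: "(\<alpha> * norm x + \<beta> * norm y) / norm (x - y) \<le> ?M * ((norm x + norm y) / norm (x - y))"
      using num d by (simp add: divide_right_mono)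
    have mem: "(norm x + norm (-y)) / norm (x + -y) \<in> S"
      unfolding S_def using xy orth_neg[OF xy(3)] neg_equal_0_iff_equal[of y] by blast
    have s: "(norm x + norm y) / norm (x - y) \<le> Sup S"
      using cSup_upper[OF mem Sbdd] by simp
    have nn: "(\<alpha> * norm x + \<beta> * norm y) / norm (x - y) \<ge> 0" using assms by simp
    have "t \<le> ?M * ((norm x + norm y) / norm (x - y)) * 2"
      unfolding t using q N nn by (intro mult_mono) auto
    also have "\<dots> \<le> ?M * Sup S * 2" using mult_right_mono[OF mult_left_mono[OF s, of ?M], of 2] Mpos by simp
    finally show ?thesis by simp
  qed
  have Tbdd: "bdd_above T" unfolding bdd_above_def using Tle by blast
  have up: "Sup T \<le> 2 * ?M * Sup S" using cSup_least[OF Tne] Tle by blast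
  have Sle: "s \<le> Sup T / ?m" if "s \<in> S" for s
  proof -
    obtain x y :: 'a where xy: "x \<noteq> 0" "y \<noteq> 0" "birkhoff_orth x y"
      and s: "s = (norm x + norm y) / norm (x + y)"
      using \<open>s \<in> S\<close> unfolding S_def by blast
    have d: "norm (x + y) > 0" using orth_plus[OF xy(3)] xy(1) by (metis zero_less_norm_iff order.strict_trans2)
    define t where "t = (\<alpha> * norm x + \<beta> * norm (-y)) / norm (x - -y)
        * norm (x /\<^sub>R norm x - (-y) /\<^sub>R norm (-y))"
    have mem: "t \<in> T" unfolding T_def t_def using xy orth_neg[OF xy(3)] neg_equal_0_iff_equal[of y] by blast
    have t': "t = (\<alpha> * norm x + \<beta> * norm y) / norm (x + y)
        * norm (x /\<^sub>R norm x + y /\<^sub>R norm y)" unfolding t_def by simp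
    have num: "?m * (norm x + norm y) \<le> \<alpha> * norm x + \<beta> * norm y"
    proof -
      have "?m * norm x \<le> \<alpha> * norm x" by (intro mult_right_mono) auto
      moreover have "?m * norm y \<le> \<beta> * norm y" by (intro mult_right_mono) auto
      ultimately show ?thesis by (simp add: distrib_left)
    qed
    have "?m * s \<le> (\<alpha> * norm x + \<beta> * norm y) / norm (x + y)"
      unfolding s using num d by (simp add: divide_right_mono)
    also have "\<dots> \<le> t" unfolding t'
      using mult_left_mono[OF unit_sum[OF xy(3,1,2)], of "(\<alpha> * norm x + \<beta> * norm y) / norm (x + y)"] assms by simp
    also have "\<dots> \<le> Sup T" using cSup_upper[OF mem Tbdd] .
    finally show ?thesis using mpos by (simp add: le_divide_eq mult.commute)
  qed
  have "Sup S \<le> Sup T / ?m" using cSup_least[OF Sne] Sle by blast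
  hence low: "?m * Sup S \<le> Sup T" using mpos by (simp add: le_divide_eq mult.commute)
  show ?thesis unfolding rc dw using low up by simp
qed

end
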